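(* Let $k\ge1$, let $\alpha_1,\dots,\alpha_k>-1$ and $\alpha_{k+1}>0$ be real, and put $\beta_j=\alpha_{j+1}+\alpha_{j+2}+\dots+\alpha_k+(k-j)+\alpha_{k+1}$ for $j=1,\dots,k$ (so $\beta_k=\alpha_{k+1}$). Let $(x_1,\dots,x_k)$ have the type-1 Dirichlet density $$f_1(x_1,\dots,x_k)=C\,x_1^{\alpha_1}\cdots x_k^{\alpha_k}(1-x_1-\dots-x_k)^{\alpha_{k+1}-1}$$ on $\{0<x_j<1,\ j=1,\dots,k,\ 0<x_1+\dots+x_k<1\}$ and $0$ elsewhere, where $C=\dfrac{\Gamma(\alpha_1+\dots+\alpha_{k+1}+k)}{\{\prod_{j=1}^k\Gamma(\alpha_j+1)\}\Gamma(\alpha_{k+1})}$. Let $(v_1,\dots,v_k)$ be a vector of positive real random variables with an arbitrary joint density $f(v_1,\dots,v_k)$ on $(0,\infty)^k$, independent of $(x_1,\dots,x_k)$. Let $$u_j=v_j\,\frac{x_j}{1-x_1-\dots-x_{j-1}},\quad j=1,\dots,k$$ (for $j=1$ the denominator is $1$), and let $g(u_1,\dots,u_k)$ be the joint density of $(u_1,\dots,u_k)$. Then, for (almost every) $(u_1,\dots,u_k)\in(0,\infty)^k$, $$\Big\{\prod_{j=1}^k\frac{\Gamma(\alpha_j+1)}{\Gamma(\alpha_j+\beta_j+1)}\Big\}g(u_1,\dots,u_k)=K_{u_j,j=1,\dots,k}^{(\alpha_j,\beta_j),j=1,\dots,k}f(u_1,\dots,u_k).$$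
   Context: The multivariable Kober fractional integral operator of the second kind is defined, for parameters $\zeta_j$ and $\alpha_j$ with $\alpha_j>0$, by $$K_{u_j,j=1,\dots,k}^{(\zeta_j,\alpha_j),j=1,\dots,k}f(u_1,\dots,u_k)=\Big\{\prod_{j=1}^k\frac{u_j^{\zeta_j}}{\Gamma(\alpha_j)}\Big\}\int_{v_1>u_1}\cdots\int_{v_k>u_k}\Big\{\prod_{j=1}^k(v_j-u_j)^{\alpha_j-1}v_j^{-\zeta_j-\alpha_j}\Big\}f(v_1,\dots,v_k)\,dv_1\cdots dv_k;$$ here it is applied with $\zeta_j=\alpha_j$ and $\alpha_j$ replaced by $\beta_j$. *)

theory Defs
  imports "HOL-Probability.Probability"
begin

text \<open>k-dimensional vectors are functions on the index set {1..k}, with the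
  product Borel measure.\<close>
abbreviation lbk :: "nat \<Rightarrow> (nat \<Rightarrow> real) measure" where
  "lbk k \<equiv> PiM {1..k} (\<lambda>_. lborel)"

definition pos_orthant :: "nat \<Rightarrow> (nat \<Rightarrow> real) set" where
  "pos_orthant k = {u. \<forall>j\<in>{1..k}. 0 < u j}"

definition dir_beta :: "nat \<Rightarrow> (nat \<Rightarrow> real) \<Rightarrow> nat \<Rightarrow> real" where
  "dir_beta k \<alpha> j = (\<Sum>i\<in>{j+1..k}. \<alpha> i) + real (k - j) + \<alpha> (k+1)"

definition dirichlet_const :: "nat \<Rightarrow> (nat \<Rightarrow> real) \<Rightarrow> real" where
  "dirichlet_const k \<alpha> =
     Gamma ((\<Sum>j\<in>{1..k+1}. \<alpha> j) + real k) /
     ((\<Prod>j\<in>{1..k}. Gamma (\<alpha> j + 1)) * Gamma (\<alpha> (k+1)))"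

definition dirichlet_support :: "nat \<Rightarrow> (nat \<Rightarrow> real) set" where
  "dirichlet_support k = {x. (\<forall>j\<in>{1..k}. 0 < x j \<and> x j < 1) \<and>
        0 < (\<Sum>j\<in>{1..k}. x j) \<and> (\<Sum>j\<in>{1..k}. x j) < 1}"

definition dirichlet1_density :: "nat \<Rightarrow> (nat \<Rightarrow> real) \<Rightarrow> (nat \<Rightarrow> real) \<Rightarrow> real" where
  "dirichlet1_density k \<alpha> x =
     (if x \<in> dirichlet_support k then
        dirichlet_const k \<alpha> * (\<Prod>j\<in>{1..k}. x j powr \<alpha> j) *
        (1 - (\<Sum>j\<in>{1..k}. x j)) powr (\<alpha> (k+1) - 1)
      else 0)"

text \<open>Multivariable Kober fractional integral operator of the second kind,
  with parameters zeta_j and alpha_j (here called a_j).\<close>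
definition kober2 :: "nat \<Rightarrow> (nat \<Rightarrow> real) \<Rightarrow> (nat \<Rightarrow> real) \<Rightarrow>
    ((nat \<Rightarrow> real) \<Rightarrow> real) \<Rightarrow> (nat \<Rightarrow> real) \<Rightarrow> real" where
  "kober2 k \<zeta> a f u =
     (\<Prod>j\<in>{1..k}. u j powr \<zeta> j / Gamma (a j)) *
     (LINT v : {v \<in> space (lbk k). \<forall>j\<in>{1..k}. u j < v j} | lbk k.
        (\<Prod>j\<in>{1..k}. (v j - u j) powr (a j - 1) * v j powr (- \<zeta> j - a j)) * f v)"

definition u_transform :: "nat \<Rightarrow> (nat \<Rightarrow> real) \<Rightarrow> (nat \<Rightarrow> real) \<Rightarrow> (nat \<Rightarrow> real)" where
  "u_transform k x v = (\<lambda>j\<in>{1..k}. v j * x j / (1 - (\<Sum>i\<in>{1..<j}. x i)))"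

end

theory Submission
  imports Defs
begin

interpretation lbP: product_sigma_finite "\<lambda>_::nat. lborel" by standard

definition Dn :: "nat \<Rightarrow> (nat \<Rightarrow> real) \<Rightarrow> (nat \<Rightarrow> real) \<Rightarrow> real" where
 "Dn n a x = (if (\<forall>j\<in>{1..n}. 0 < x j) \<and> (\<Sum>j\<in>{1..n}. x j) < 1 then
     (\<Prod>j\<in>{1..n}. x j powr a j) * (1 - (\<Sum>j\<in>{1..n}. x j)) powr (a (n+1) - 1) else 0)"

definition kern :: "real \<Rightarrow> real \<Rightarrow> real \<Rightarrow> real \<Rightarrow> real" where
 "kern a b w v = (if 0 < w \<and> w < v then w powr a * (v - w) powr (b - 1) * v powr (-a-b) else 0)"

lemma comp_meas: "i \<in> {1..n} \<Longrightarrow> (\<lambda>x. x i) \<in> borel_measurable (lbk n)"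
  by measurable

lemma Dn_meas[measurable]: "Dn n a \<in> borel_measurable (lbk n)"
  unfolding Dn_def by measurable

lemma kern_meas[measurable (raw)]: 
  assumes [measurable]: "f \<in> borel_measurable M" "g \<in> borel_measurable M" shows "(\<lambda>x. kern a b (f x) (g x)) \<in> borel_measurable M"
  unfolding kern_def by measurable

lemma ut_meas[measurable]: "(\<lambda>x. u_transform n x v) \<in> lbk n \<rightarrow>\<^sub>M lbk n"
  unfolding u_transform_def by measurable


lemma lbk_Suc: "lbk (Suc n) = PiM (insert (Suc n) {1..n}) (\<lambda>_. lborel)"
  by (simp add: atLeastAtMostSuc_conv)

lemma ins: assumes "f \<in> borel_measurable (lbk (Suc n))"
  shows "integral\<^sup>N (lbk (Suc n)) f = (\<integral>\<^sup>+x. \<integral>\<^sup>+y. f (x(Suc n:=y)) \<partial>lborel \<partial>lbk n)"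
  using lbP.product_nn_integral_insert[of "{1..n}" "Suc n" f] assms unfolding lbk_Suc by simp

lemma ins_rev: assumes "f \<in> borel_measurable (lbk (Suc n))"
  shows "integral\<^sup>N (lbk (Suc n)) f = (\<integral>\<^sup>+y. \<integral>\<^sup>+x. f (x(Suc n:=y)) \<partial>lbk n \<partial>lborel)"
  using lbP.product_nn_integral_insert_rev[of "{1..n}" "Suc n" f] assms unfolding lbk_Suc by simp

lemma sf_lbk: "sigma_finite_measure (lbk n)"
proof -
  interpret finite_product_sigma_finite "\<lambda>_. lborel" "{1..n}" by standard simp
  show ?thesis ..
qed

lemma psf: "pair_sigma_finite (lbk n) lborel"
  unfolding pair_sigma_finite_def using sf_lbk sigma_finite_lborel by auto

lemma upd_meas[measurable (raw)]:
  assumes F[measurable]: "F \<in> N \<rightarrow>\<^sub>M lbk n" and e[measurable]: "e \<in> borel_measurable N"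
  shows "(\<lambda>z. (F z)(Suc n := e z)) \<in> N \<rightarrow>\<^sub>M lbk (Suc n)"
proof -
  have "(\<lambda>z. \<lambda>j\<in>{1..Suc n}. if j = Suc n then e z else F z j) \<in> N \<rightarrow>\<^sub>M lbk (Suc n)"
  proof (rule measurable_restrict)
    fix j assume j: "j \<in> {1..Suc n}"
    show "(\<lambda>z. if j = Suc n then e z else F z j) \<in> N \<rightarrow>\<^sub>M lborel"
    proof (cases "j = Suc n")
      case False
      then have "j \<in> {1..n}" using j by auto
      then have "(\<lambda>z. F z j) \<in> borel_measurable N"
        by (intro measurable_compose[OF F]) measurable
      then show ?thesis using False by simp
    qed simp
  qed
  moreover have "\<And>z. z \<in> space N \<Longrightarrow> (F z)(Suc n := e z) = (\<lambda>j\<in>{1..Suc n}. if j = Suc n then e z else F z j)"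
  proof -
    fix z assume "z \<in> space N"
    then have "F z \<in> space (lbk n)" using measurable_space[OF F] by blast
    then have "\<And>j. j \<notin> {1..n} \<Longrightarrow> F z j = undefined" by (auto simp: space_PiM PiE_def extensional_def)
    then show "(F z)(Suc n := e z) = (\<lambda>j\<in>{1..Suc n}. if j = Suc n then e z else F z j)"
      by (auto simp: fun_eq_iff)
  qed
  ultimately show ?thesis using measurable_cong by (smt (verit))
qed

lemma ut_upd: "u_transform (Suc n) (x(Suc n := y)) v = (u_transform n x v)(Suc n := v (Suc n) * y / (1 - (\<Sum>j\<in>{1..n}. x j)))"
proof (rule ext)
  fix j
  have s: "(\<Sum>i\<in>{1..<j}. (x(Suc n := y)) i) = (\<Sum>i\<in>{1..<j}. x i)" if "j \<le> Suc n" for j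
    using that by (intro sum.cong) auto
  show "u_transform (Suc n) (x(Suc n := y)) v j = ((u_transform n x v)(Suc n := v (Suc n) * y / (1 - (\<Sum>j\<in>{1..n}. x j)))) j"
    unfolding u_transform_def using s[of j] 
    by (auto simp: atLeastLessThanSuc_atLeastAtMost)
qed

lemma alg: fixes c V w p q :: real assumes "c > 0" "V > 0" "0 < w" "w < V"
  shows "c / V * ((c / V * w) powr p * (c - c / V * w) powr (q - 1)) = c powr (p + q) * (w powr p * (V - w) powr (q - 1) * V powr (- p - q))"
proof -
  have e1: "c / V * w = c * w / V" by (simp add: field_simps)
  have e2: "c - c * w / V = c * (V - w) / V" using assms by (simp add: field_simps)
  have Vw: "V - w > 0" using assms by simp
  have A: "(c * w / V) powr p = c powr p * w powr p / V powr p"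
    using assms by (simp add: powr_divide powr_mult)
  have B: "(c * (V - w) / V) powr (q - 1) = c powr (q - 1) * (V - w) powr (q - 1) / V powr (q - 1)"
    using assms Vw by (simp add: powr_divide powr_mult)
  have C: "c powr (p + q) = c powr p * c powr (q - 1) * c"
  proof -
    have "c powr (p + q) = c powr (p + (q - 1) + 1)" by simp
    also have "\<dots> = c powr p * c powr (q - 1) * c powr 1" by (simp only: powr_add)
    finally show ?thesis using assms by simp
  qed
  have D: "V powr (- p - q) = 1 / (V powr p * V powr (q - 1) * V)"
  proof -
    have "V powr (p + q) = V powr (p + (q - 1) + 1)" by simp
    also have "\<dots> = V powr p * V powr (q - 1) * V powr 1" by (simp only: powr_add)
    finally have "V powr (p + q) = V powr p * V powr (q - 1) * V" using assms by simp
    moreover have "V powr (- p - q) = 1 / V powr (p + q)"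
      by (simp add: powr_minus_divide[symmetric])
    ultimately show ?thesis by simp
  qed
  have "V powr p > 0" "V powr (q - 1) > 0" using assms by auto
  then show ?thesis unfolding e1 e2 A B C D using assms
    by (simp add: field_simps)
qed


lemma ut_space[measurable]: "u_transform n x v \<in> space (lbk n)"
  by (simp add: u_transform_def space_PiM)

lemma kern_nonneg: "0 \<le> kern a b w v"
  by (simp add: kern_def)

lemma Dn_nonneg: "0 \<le> Dn n a x"
  by (simp add: Dn_def prod_nonneg)

lemma Dsuc: "Dn (Suc n) a (x(Suc n := y)) =
   (if (\<forall>j\<in>{1..n}. 0 < x j) \<and> 0 < y \<and> (\<Sum>j\<in>{1..n}. x j) + y < 1 then
     (\<Prod>j\<in>{1..n}. x j powr a j) * y powr a (Suc n) * (1 - (\<Sum>j\<in>{1..n}. x j) - y) powr (a (Suc (Suc n)) - 1) else 0)"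
proof -
  have s: "(\<Sum>j\<in>{1..n}. (x(Suc n := y)) j) = (\<Sum>j\<in>{1..n}. x j)" by (intro sum.cong) auto
  have p: "(\<Prod>j\<in>{1..n}. (x(Suc n := y)) j powr a j) = (\<Prod>j\<in>{1..n}. x j powr a j)" by (intro prod.cong) auto
  have b: "(\<forall>j\<in>{1..Suc n}. 0 < (x(Suc n := y)) j) \<longleftrightarrow> (\<forall>j\<in>{1..n}. 0 < x j) \<and> 0 < y"
    by (auto simp: atLeastAtMostSuc_conv)
  show ?thesis unfolding Dn_def b by (simp add: s p sum.cl_ivl_Suc prod.cl_ivl_Suc diff_diff_eq)
qed

lemma Dprime: "Dn n (a(Suc n := a (Suc n) + a (Suc (Suc n)) + 1)) x =
   (if (\<forall>j\<in>{1..n}. 0 < x j) \<and> (\<Sum>j\<in>{1..n}. x j) < 1 then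
     (\<Prod>j\<in>{1..n}. x j powr a j) * (1 - (\<Sum>j\<in>{1..n}. x j)) powr (a (Suc n) + a (Suc (Suc n))) else 0)"
proof -
  have p: "(\<Prod>j\<in>{1..n}. x j powr (a(Suc n := a (Suc n) + a (Suc (Suc n)) + 1)) j) = (\<Prod>j\<in>{1..n}. x j powr a j)" by (intro prod.cong) auto
  show ?thesis unfolding Dn_def by (simp add: p)
qed

lemma inner:
  assumes H[measurable]: "H \<in> borel_measurable (lbk (Suc n))" and vpos: "v (Suc n) > 0"
  shows "(\<integral>\<^sup>+y. H (u_transform (Suc n) (x(Suc n := y)) v) * ennreal (Dn (Suc n) a (x(Suc n := y))) \<partial>lborel)
   = ennreal (Dn n (a(Suc n := a (Suc n) + a (Suc (Suc n)) + 1)) x) *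
     (\<integral>\<^sup>+w. H ((u_transform n x v)(Suc n := w)) * ennreal (kern (a (Suc n)) (a (Suc (Suc n))) w (v (Suc n))) \<partial>lborel)"
proof -
  define s where "s = (\<Sum>j\<in>{1..n}. x j)"
  define pr where "pr = (\<Prod>j\<in>{1..n}. x j powr a j)"
  define U where "U = u_transform n x v"
  define P where "P = (\<forall>j\<in>{1..n}. 0 < x j)"
  have U[measurable]: "U \<in> space (lbk n)" unfolding U_def by (rule ut_space)
  have Ds: "\<And>y. Dn (Suc n) a (x(Suc n := y)) = (if P \<and> 0 < y \<and> s + y < 1 then pr * y powr a (Suc n) * (1 - s - y) powr (a (Suc (Suc n)) - 1) else 0)"
    unfolding Dsuc s_def pr_def P_def ..
  have Dp: "Dn n (a(Suc n := a (Suc n) + a (Suc (Suc n)) + 1)) x = (if P \<and> s < 1 then pr * (1 - s) powr (a (Suc n) + a (Suc (Suc n))) else 0)"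
    unfolding Dprime s_def pr_def P_def ..
  have uu: "\<And>y. u_transform (Suc n) (x(Suc n := y)) v = U(Suc n := v (Suc n) * y / (1 - s))"
    unfolding ut_upd U_def s_def ..
  show ?thesis
  proof (cases "P \<and> s < 1")
    case False
    then have "\<And>y. Dn (Suc n) a (x(Suc n := y)) = 0" unfolding Ds by auto
    then show ?thesis using False by (auto simp: Dp)
  next
    case True
    define c where "c = 1 - s"
    have c: "c > 0" using True c_def by simp
    define c0 where "c0 = c / v (Suc n)"
    have c0: "c0 > 0" using c vpos c0_def by simp
    have meas: "(\<lambda>y. H (U(Suc n := v (Suc n) * y / c)) * ennreal (Dn (Suc n) a (x(Suc n := y)))) \<in> borel_measurable borel"
      unfolding Ds by measurable
    have "(\<integral>\<^sup>+y. H (u_transform (Suc n) (x(Suc n := y)) v) * ennreal (Dn (Suc n) a (x(Suc n := y))) \<partial>lborel)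
       = (\<integral>\<^sup>+y. H (U(Suc n := v (Suc n) * y / c)) * ennreal (Dn (Suc n) a (x(Suc n := y))) \<partial>lborel)"
      unfolding uu c_def ..
    also have "\<dots> = ennreal \<bar>c0\<bar> * (\<integral>\<^sup>+w. H (U(Suc n := v (Suc n) * (0 + c0 * w) / c)) * ennreal (Dn (Suc n) a (x(Suc n := 0 + c0 * w))) \<partial>lborel)"
      by (rule nn_integral_real_affine[OF meas]) (use c0 in simp)
    also have "\<dots> = (\<integral>\<^sup>+w. ennreal c0 * (H (U(Suc n := v (Suc n) * (0 + c0 * w) / c)) * ennreal (Dn (Suc n) a (x(Suc n := 0 + c0 * w)))) \<partial>lborel)"
    proof -
      have "(\<lambda>w. H (U(Suc n := v (Suc n) * (0 + c0 * w) / c)) * ennreal (Dn (Suc n) a (x(Suc n := 0 + c0 * w)))) \<in> borel_measurable lborel"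
        unfolding Ds by measurable
      then show ?thesis using c0 by (simp add: nn_integral_cmult)
    qed
    also have "\<dots> = (\<integral>\<^sup>+w. ennreal (Dn n (a(Suc n := a (Suc n) + a (Suc (Suc n)) + 1)) x) * (H (U(Suc n := w)) * ennreal (kern (a (Suc n)) (a (Suc (Suc n))) w (v (Suc n)))) \<partial>lborel)"
    proof (rule nn_integral_cong)
      fix w :: real
      have e: "v (Suc n) * (0 + c0 * w) / c = w" using c vpos unfolding c0_def by simp
      have r: "c0 * Dn (Suc n) a (x(Suc n := 0 + c0 * w)) = Dn n (a(Suc n := a (Suc n) + a (Suc (Suc n)) + 1)) x * kern (a (Suc n)) (a (Suc (Suc n))) w (v (Suc n))"
      proof (cases "0 < w \<and> w < v (Suc n)")
        case True
        have "c0 * w < c0 * v (Suc n)" using True c0 by simp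
        then have "c0 * w < c" using vpos unfolding c0_def by simp
        then have cond: "P \<and> 0 < c0 * w \<and> s + c0 * w < 1" using True c0 \<open>P \<and> s < 1\<close> unfolding c_def by simp
        have "c0 * Dn (Suc n) a (x(Suc n := 0 + c0 * w)) = pr * (c / v (Suc n) * ((c / v (Suc n) * w) powr a (Suc n) * (c - c / v (Suc n) * w) powr (a (Suc (Suc n)) - 1)))"
          unfolding Ds using cond by (simp add: c0_def c_def diff_diff_eq)
        also have "\<dots> = pr * (c powr (a (Suc n) + a (Suc (Suc n))) * (w powr a (Suc n) * (v (Suc n) - w) powr (a (Suc (Suc n)) - 1) * v (Suc n) powr (- a (Suc n) - a (Suc (Suc n)))))"
          using alg[OF c vpos, of w "a (Suc n)" "a (Suc (Suc n))"] True by simp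
        finally show ?thesis unfolding Dp kern_def using True \<open>P \<and> s < 1\<close> by (simp add: c_def)
      next
        case False
        have cond: "\<not> (P \<and> 0 < c0 * w \<and> s + c0 * w < 1)"
        proof
          assume A: "P \<and> 0 < c0 * w \<and> s + c0 * w < 1"
          then have "0 < w" using c0 by (simp add: zero_less_mult_iff)
          moreover have "c0 * w < c0 * v (Suc n)" using A vpos c unfolding c0_def c_def by simp
          then have "w < v (Suc n)" using c0 by simp
          ultimately show False using False by simp
        qed
        have "Dn (Suc n) a (x(Suc n := 0 + c0 * w)) = 0" unfolding Ds using cond by auto
        moreover have "kern (a (Suc n)) (a (Suc (Suc n))) w (v (Suc n)) = 0" using False by (auto simp: kern_def)
        ultimately show ?thesis by simp
      qed
      show "ennreal c0 * (H (U(Suc n := v (Suc n) * (0 + c0 * w) / c)) * ennreal (Dn (Suc n) a (x(Suc n := 0 + c0 * w)))) =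
         ennreal (Dn n (a(Suc n := a (Suc n) + a (Suc (Suc n)) + 1)) x) * (H (U(Suc n := w)) * ennreal (kern (a (Suc n)) (a (Suc (Suc n))) w (v (Suc n))))"
      proof -
        have m: "ennreal c0 * ennreal (Dn (Suc n) a (x(Suc n := 0 + c0 * w))) = ennreal (Dn n (a(Suc n := a (Suc n) + a (Suc (Suc n)) + 1)) x) * ennreal (kern (a (Suc n)) (a (Suc (Suc n))) w (v (Suc n)))"
          by (metis ennreal_mult c0 Dn_nonneg kern_nonneg less_imp_le r)
        have "ennreal c0 * (H (U(Suc n := v (Suc n) * (0 + c0 * w) / c)) * ennreal (Dn (Suc n) a (x(Suc n := 0 + c0 * w))))
           = H (U(Suc n := w)) * (ennreal c0 * ennreal (Dn (Suc n) a (x(Suc n := 0 + c0 * w))))"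
          unfolding e by (simp add: mult_ac)
        also have "\<dots> = ennreal (Dn n (a(Suc n := a (Suc n) + a (Suc (Suc n)) + 1)) x) * (H (U(Suc n := w)) * ennreal (kern (a (Suc n)) (a (Suc (Suc n))) w (v (Suc n))))"
          unfolding m by (simp add: mult_ac)
        finally show ?thesis .
      qed
    qed
    also have "\<dots> = ennreal (Dn n (a(Suc n := a (Suc n) + a (Suc (Suc n)) + 1)) x) *
     (\<integral>\<^sup>+w. H ((u_transform n x v)(Suc n := w)) * ennreal (kern (a (Suc n)) (a (Suc (Suc n))) w (v (Suc n))) \<partial>lborel)"
      unfolding U_def by (rule nn_integral_cmult) measurable
    finally show ?thesis .
  qed
qed


lemma core:
  "(\<forall>j\<in>{1..n}. 0 < v j) \<Longrightarrow> (\<forall>j\<in>{1..n}. b j = (if j = n then a (n+1) else a (j+1) + 1 + b (j+1))) \<Longrightarrow>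
   H \<in> borel_measurable (lbk n) \<Longrightarrow>
   (\<integral>\<^sup>+x. H (u_transform n x v) * ennreal (Dn n a x) \<partial>lbk n) =
   (\<integral>\<^sup>+u. H u * ennreal (\<Prod>j\<in>{1..n}. kern (a j) (b j) (u j) (v j)) \<partial>lbk n)"
proof (induction n arbitrary: a H)
  case 0
  have "u_transform 0 x v = (\<lambda>_. undefined)" for x by (simp add: u_transform_def fun_eq_iff)
  then show ?case by (simp add: PiM_empty nn_integral_count_space_finite Dn_def)
next
  case (Suc n)
  note H[measurable] = Suc.prems(3)
  define a' where "a' = a(Suc n := a (Suc n) + a (Suc (Suc n)) + 1)"
  have vpos: "v (Suc n) > 0" using Suc.prems(1) by simp
  have bm: "b (Suc n) = a (Suc (Suc n))" using Suc.prems(2) by simp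
  interpret psf: pair_sigma_finite "lbk n" lborel by (rule psf)
  have "(\<integral>\<^sup>+x. H (u_transform (Suc n) x v) * ennreal (Dn (Suc n) a x) \<partial>lbk (Suc n))
     = (\<integral>\<^sup>+x. \<integral>\<^sup>+y. H (u_transform (Suc n) (x(Suc n := y)) v) * ennreal (Dn (Suc n) a (x(Suc n := y))) \<partial>lborel \<partial>lbk n)"
    by (rule ins) measurable
  also have "\<dots> = (\<integral>\<^sup>+x. ennreal (Dn n a' x) * (\<integral>\<^sup>+w. H ((u_transform n x v)(Suc n := w)) * ennreal (kern (a (Suc n)) (a (Suc (Suc n))) w (v (Suc n))) \<partial>lborel) \<partial>lbk n)"
    unfolding a'_def by (rule nn_integral_cong, rule inner[of H n v, OF H vpos])
  also have "\<dots> = (\<integral>\<^sup>+x. \<integral>\<^sup>+w. ennreal (Dn n a' x) * (H ((u_transform n x v)(Suc n := w)) * ennreal (kern (a (Suc n)) (a (Suc (Suc n))) w (v (Suc n)))) \<partial>lborel \<partial>lbk n)"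
    by (rule nn_integral_cong, rule nn_integral_cmult[symmetric]) measurable
  also have "\<dots> = (\<integral>\<^sup>+w. \<integral>\<^sup>+x. ennreal (Dn n a' x) * (H ((u_transform n x v)(Suc n := w)) * ennreal (kern (a (Suc n)) (a (Suc (Suc n))) w (v (Suc n)))) \<partial>lbk n \<partial>lborel)"
    by (rule psf.Fubini'[symmetric]) measurable
  also have "\<dots> = (\<integral>\<^sup>+w. ennreal (kern (a (Suc n)) (a (Suc (Suc n))) w (v (Suc n))) * (\<integral>\<^sup>+x. H ((u_transform n x v)(Suc n := w)) * ennreal (Dn n a' x) \<partial>lbk n) \<partial>lborel)"
  proof (rule nn_integral_cong)
    fix w
    show "(\<integral>\<^sup>+x. ennreal (Dn n a' x) * (H ((u_transform n x v)(Suc n := w)) * ennreal (kern (a (Suc n)) (a (Suc (Suc n))) w (v (Suc n)))) \<partial>lbk n)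
      = ennreal (kern (a (Suc n)) (a (Suc (Suc n))) w (v (Suc n))) * (\<integral>\<^sup>+x. H ((u_transform n x v)(Suc n := w)) * ennreal (Dn n a' x) \<partial>lbk n)"
      by (subst nn_integral_cmult[symmetric]) (measurable, simp add: mult_ac)
  qed
  also have "\<dots> = (\<integral>\<^sup>+w. ennreal (kern (a (Suc n)) (a (Suc (Suc n))) w (v (Suc n))) * (\<integral>\<^sup>+u. H (u(Suc n := w)) * ennreal (\<Prod>j\<in>{1..n}. kern (a j) (b j) (u j) (v j)) \<partial>lbk n) \<partial>lborel)"
  proof (rule nn_integral_cong)
    fix w :: real
    have Hw: "(\<lambda>u. H (u(Suc n := w))) \<in> borel_measurable (lbk n)" by measurable
    have c1: "\<forall>j\<in>{1..n}. 0 < v j" using Suc.prems(1) by simp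
    have c2: "\<forall>j\<in>{1..n}. b j = (if j = n then a' (n+1) else a' (j+1) + 1 + b (j+1))"
    proof
      fix j assume j: "j \<in> {1..n}"
      show "b j = (if j = n then a' (n+1) else a' (j+1) + 1 + b (j+1))"
        using Suc.prems(2) j bm unfolding a'_def by (cases "j = n") auto
    qed
    have p: "(\<Prod>j\<in>{1..n}. kern (a' j) (b j) (u j) (v j)) = (\<Prod>j\<in>{1..n}. kern (a j) (b j) (u j) (v j))" for u
      unfolding a'_def by (intro prod.cong) auto
    show "ennreal (kern (a (Suc n)) (a (Suc (Suc n))) w (v (Suc n))) * (\<integral>\<^sup>+x. H ((u_transform n x v)(Suc n := w)) * ennreal (Dn n a' x) \<partial>lbk n)
      = ennreal (kern (a (Suc n)) (a (Suc (Suc n))) w (v (Suc n))) * (\<integral>\<^sup>+u. H (u(Suc n := w)) * ennreal (\<Prod>j\<in>{1..n}. kern (a j) (b j) (u j) (v j)) \<partial>lbk n)"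
      using Suc.IH[OF c1 c2 Hw] by (simp only: p)
  qed
  also have "\<dots> = (\<integral>\<^sup>+w. \<integral>\<^sup>+u. H (u(Suc n := w)) * ennreal (\<Prod>j\<in>{1..Suc n}. kern (a j) (b j) ((u(Suc n := w)) j) (v j)) \<partial>lbk n \<partial>lborel)"
  proof (rule nn_integral_cong)
    fix w :: real
    have p: "(\<Prod>j\<in>{1..Suc n}. kern (a j) (b j) ((u(Suc n := w)) j) (v j)) = (\<Prod>j\<in>{1..n}. kern (a j) (b j) (u j) (v j)) * kern (a (Suc n)) (a (Suc (Suc n))) w (v (Suc n))" for u
    proof -
      have "(\<Prod>j\<in>{1..n}. kern (a j) (b j) ((u(Suc n := w)) j) (v j)) = (\<Prod>j\<in>{1..n}. kern (a j) (b j) (u j) (v j))"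
        by (intro prod.cong) auto
      then show ?thesis by (simp add: prod.cl_ivl_Suc bm)
    qed
    have e: "ennreal ((\<Prod>j\<in>{1..n}. kern (a j) (b j) (u j) (v j)) * kern (a (Suc n)) (a (Suc (Suc n))) w (v (Suc n)))
       = ennreal (\<Prod>j\<in>{1..n}. kern (a j) (b j) (u j) (v j)) * ennreal (kern (a (Suc n)) (a (Suc (Suc n))) w (v (Suc n)))" for u
      by (rule ennreal_mult) (auto intro: prod_nonneg kern_nonneg)
    show "ennreal (kern (a (Suc n)) (a (Suc (Suc n))) w (v (Suc n))) * (\<integral>\<^sup>+u. H (u(Suc n := w)) * ennreal (\<Prod>j\<in>{1..n}. kern (a j) (b j) (u j) (v j)) \<partial>lbk n)
      = (\<integral>\<^sup>+u. H (u(Suc n := w)) * ennreal (\<Prod>j\<in>{1..Suc n}. kern (a j) (b j) ((u(Suc n := w)) j) (v j)) \<partial>lbk n)"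
      unfolding p e by (subst nn_integral_cmult[symmetric]) (measurable, simp add: mult_ac)
  qed
  also have "\<dots> = (\<integral>\<^sup>+u. H u * ennreal (\<Prod>j\<in>{1..Suc n}. kern (a j) (b j) (u j) (v j)) \<partial>lbk (Suc n))"
    by (rule ins_rev[symmetric]) measurable
  finally show ?case .
qed


lemma beta_rec: "\<forall>j\<in>{1..k}. dir_beta k \<alpha> j = (if j = k then \<alpha> (k+1) else \<alpha> (j+1) + 1 + dir_beta k \<alpha> (j+1))"
proof
  fix j assume j: "j \<in> {1..k}"
  show "dir_beta k \<alpha> j = (if j = k then \<alpha> (k+1) else \<alpha> (j+1) + 1 + dir_beta k \<alpha> (j+1))"
  proof (cases "j = k")
    case False
    then have jk: "j + 1 \<le> k" using j by auto
    have "(\<Sum>i\<in>{j+1..k}. \<alpha> i) = \<alpha> (j+1) + (\<Sum>i\<in>{j+1+1..k}. \<alpha> i)"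
      using jk by (simp add: sum.atLeast_Suc_atMost)
    moreover have "real (k - j) = 1 + real (k - (j+1))" using jk by auto
    ultimately show ?thesis using False unfolding dir_beta_def by simp
  qed (simp add: dir_beta_def)
qed

lemma beta_pos: assumes "\<forall>j\<in>{1..k}. \<alpha> j > -1" "\<alpha> (k+1) > 0" "j \<le> k"
  shows "dir_beta k \<alpha> j > 0"
proof -
  have "(\<Sum>i\<in>{j+1..k}. \<alpha> i) + real (k - j) = (\<Sum>i\<in>{j+1..k}. (\<alpha> i + 1))"
    by (simp add: sum.distrib)
  moreover have "(\<Sum>i\<in>{j+1..k}. (\<alpha> i + 1)) \<ge> 0"
  proof (intro sum_nonneg)
    fix i assume "i \<in> {j+1..k}"
    then have "\<alpha> i > -1" using assms(1) by auto
    then show "0 \<le> \<alpha> i + 1" by simp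
  qed
  ultimately show ?thesis using assms(2) unfolding dir_beta_def by simp
qed

lemma dens_eq: assumes "k \<ge> 1"
  shows "dirichlet1_density k \<alpha> x = dirichlet_const k \<alpha> * Dn k \<alpha> x"
proof -
  have "x \<in> dirichlet_support k \<longleftrightarrow> (\<forall>j\<in>{1..k}. 0 < x j) \<and> (\<Sum>j\<in>{1..k}. x j) < 1"
  proof
    assume A: "(\<forall>j\<in>{1..k}. 0 < x j) \<and> (\<Sum>j\<in>{1..k}. x j) < 1"
    have le: "x j \<le> (\<Sum>j\<in>{1..k}. x j)" if "j \<in> {1..k}" for j
      using A that by (intro member_le_sum) (simp_all add: less_imp_le)
    have "0 < (\<Sum>j\<in>{1..k}. x j)" using A assms by (intro sum_pos) auto
    then show "x \<in> dirichlet_support k" using A le unfolding dirichlet_support_def by force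
  qed (auto simp: dirichlet_support_def)
  then show ?thesis unfolding dirichlet1_density_def Dn_def by simp
qed

lemma const_pos: assumes "\<forall>j\<in>{1..k}. \<alpha> j > -1" "\<alpha> (k+1) > 0"
  shows "dirichlet_const k \<alpha> > 0"
proof -
  have "(\<Sum>j\<in>{1..k+1}. \<alpha> j) + real k = dir_beta k \<alpha> 0"
    unfolding dir_beta_def by (simp add: add_ac)
  then have p: "(\<Sum>j\<in>{1..k+1}. \<alpha> j) + real k > 0" using beta_pos[OF assms, of 0] by simp
  have ap: "\<And>j. j\<in>{1..k} \<Longrightarrow> \<alpha> j + 1 > 0" using assms(1) by fastforce
  have "(\<Prod>j\<in>{1..k}. Gamma (\<alpha> j + 1)) > 0"
    by (intro prod_pos Gamma_real_pos ap)
  then show ?thesis unfolding dirichlet_const_def using p assms(2)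
    by (intro divide_pos_pos mult_pos_pos Gamma_real_pos) auto
qed

lemma const_id: assumes "\<forall>j\<in>{1..k}. \<alpha> j > -1" "\<alpha> (k+1) > 0" "k \<ge> 1"
  shows "(\<Prod>j\<in>{1..k}. Gamma (\<alpha> j + 1) / Gamma (\<alpha> j + dir_beta k \<alpha> j + 1)) * dirichlet_const k \<alpha>
     = 1 / (\<Prod>j\<in>{1..k}. Gamma (dir_beta k \<alpha> j))"
proof -
  define \<beta> where "\<beta> = dir_beta k \<alpha>"
  obtain k' where k': "k = Suc k'" using assms(3) by (cases k) auto
  have gpos: "Gamma (\<beta> j) > 0" if "j \<le> k" for j
    using beta_pos[OF assms(1,2) that] unfolding \<beta>_def by (intro Gamma_real_pos)
  have ap: "\<And>j. j\<in>{1..k} \<Longrightarrow> \<alpha> j + 1 > 0" using assms(1) by fastforce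
  have ga: "(\<Prod>j\<in>{1..k}. Gamma (\<alpha> j + 1)) > 0"
    by (intro prod_pos Gamma_real_pos ap)
  have b0: "(\<Sum>j\<in>{1..k+1}. \<alpha> j) + real k = \<beta> 0"
    unfolding dir_beta_def \<beta>_def by (simp add: add_ac)
  have bk: "\<alpha> (k+1) = \<beta> k" unfolding \<beta>_def dir_beta_def by simp
  have shift: "\<alpha> j + \<beta> j + 1 = \<beta> (j - 1)" if "j \<in> {1..k}" for j
  proof -
    have "(\<Sum>i\<in>{j-1+1..k}. \<alpha> i) = \<alpha> j + (\<Sum>i\<in>{j+1..k}. \<alpha> i)"
      using that by (simp add: sum.atLeast_Suc_atMost)
    moreover have "real (k - (j - 1)) = real (k - j) + 1" using that by auto
    ultimately show ?thesis unfolding \<beta>_def dir_beta_def by simp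
  qed
  have P1: "(\<Prod>j\<in>{1..k}. Gamma (\<alpha> j + 1) / Gamma (\<alpha> j + \<beta> j + 1)) = (\<Prod>j\<in>{1..k}. Gamma (\<alpha> j + 1)) / (\<Prod>j\<in>{0..k'}. Gamma (\<beta> j))"
  proof -
    have "(\<Prod>j\<in>{1..k}. Gamma (\<alpha> j + 1) / Gamma (\<alpha> j + \<beta> j + 1)) = (\<Prod>j\<in>{1..k}. Gamma (\<alpha> j + 1) / Gamma (\<beta> (j - 1)))"
      using shift by (intro prod.cong) auto
    also have "\<dots> = (\<Prod>j\<in>{1..k}. Gamma (\<alpha> j + 1)) / (\<Prod>j\<in>{1..k}. Gamma (\<beta> (j - 1)))"
      by (rule prod_dividef)
    also have "(\<Prod>j\<in>{1..k}. Gamma (\<beta> (j - 1))) = (\<Prod>j\<in>{0..k'}. Gamma (\<beta> j))"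
      unfolding k' using prod.shift_bounds_cl_Suc_ivl[of "\<lambda>j. Gamma (\<beta> (j - 1))" 0 k'] by simp
    finally show ?thesis .
  qed
  have tele: "(\<Prod>j\<in>{0..k'}. Gamma (\<beta> j)) * Gamma (\<beta> k) = Gamma (\<beta> 0) * (\<Prod>j\<in>{1..k}. Gamma (\<beta> j))"
  proof -
    have "(\<Prod>j\<in>{0..k'}. Gamma (\<beta> j)) * Gamma (\<beta> k) = (\<Prod>j\<in>{0..k}. Gamma (\<beta> j))"
      unfolding k' by (simp add: prod.atLeast0_atMost_Suc)
    also have "\<dots> = Gamma (\<beta> 0) * (\<Prod>j\<in>{1..k}. Gamma (\<beta> j))"
      by (simp add: prod.atLeast_Suc_atMost)
    finally show ?thesis .
  qed
  have q1: "(\<Prod>j\<in>{0..k'}. Gamma (\<beta> j)) > 0" using gpos k' by (intro prod_pos) auto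
  have q2: "(\<Prod>j\<in>{1..k}. Gamma (\<beta> j)) > 0" using gpos by (intro prod_pos) auto
  have "Gamma (\<beta> 0) > 0" "Gamma (\<beta> k) > 0" using gpos by auto
  have key: "A / B * (G0 / (A * Gk)) = 1 / Q" if "A > 0" "B > 0" "Gk > 0" "Q > 0" "B * Gk = G0 * Q" for A B G0 Gk Q :: real
  proof -
    have "G0 * Q > 0" using that by (metis mult_pos_pos)
    then have "G0 \<noteq> 0" by auto
    then show ?thesis using that by (simp add: field_simps)
  qed
  show ?thesis unfolding \<beta>_def[symmetric] P1 dirichlet_const_def b0 bk
    by (rule key[OF ga q1 _ q2 tele]) (use \<open>Gamma (\<beta> k) > 0\<close> in simp)
qed

theorem theorem1p2:
  fixes M :: "'a measure" and k :: nat and \<alpha> :: "nat \<Rightarrow> real"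
    and X V :: "'a \<Rightarrow> nat \<Rightarrow> real"
    and f g :: "(nat \<Rightarrow> real) \<Rightarrow> real"
  assumes "prob_space M"
    and "k \<ge> 1"
    and "\<forall>j\<in>{1..k}. \<alpha> j > -1"
    and "\<alpha> (k+1) > 0"
    and "distributed M (lbk k) X (\<lambda>x. ennreal (dirichlet1_density k \<alpha> x))"
    and "distributed M (lbk k) V (\<lambda>v. ennreal (f v))"
    and "\<forall>v. f v \<ge> 0"
    and "\<forall>v. v \<notin> pos_orthant k \<longrightarrow> f v = 0"
    and "prob_space.indep_var M (lbk k) X (lbk k) V"
    and "distributed M (lbk k) (\<lambda>\<omega>. u_transform k (X \<omega>) (V \<omega>)) (\<lambda>u. ennreal (g u))"
    and "\<forall>u. g u \<ge> 0"
  shows "AE u in lbk k. u \<in> pos_orthant k \<longrightarrow>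
           (\<Prod>j\<in>{1..k}. Gamma (\<alpha> j + 1) / Gamma (\<alpha> j + dir_beta k \<alpha> j + 1)) * g u
           = kober2 k \<alpha> (dir_beta k \<alpha>) f u"
proof -
  interpret P: prob_space M by fact
  define \<beta> where "\<beta> = dir_beta k \<alpha>"
  define C where "C = dirichlet_const k \<alpha>"
  have Cpos: "C > 0" using const_pos assms(3,4) C_def by simp
  have f_meas[measurable]: "f \<in> borel_measurable (lbk k)"
    using distributed_real_measurable assms(6,7) by metis
  have g_meas[measurable]: "g \<in> borel_measurable (lbk k)"
    using distributed_real_measurable assms(10,11) by metis
  define U where "U = (\<lambda>\<omega>. u_transform k (X \<omega>) (V \<omega>))"
  define G where "G = (\<lambda>u. \<integral>\<^sup>+v. ennreal (C * f v * (\<Prod>j\<in>{1..k}. kern (\<alpha> j) (\<beta> j) (u j) (v j))) \<partial>lbk k)"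
  interpret lk: sigma_finite_measure "lbk k" by (rule sf_lbk)
  interpret pp: pair_sigma_finite "lbk k" "lbk k" unfolding pair_sigma_finite_def by (intro conjI sf_lbk)
  have G_meas[measurable]: "G \<in> borel_measurable (lbk k)" unfolding G_def by measurable
  have joint: "distributed M (lbk k \<Otimes>\<^sub>M lbk k) (\<lambda>\<omega>. (X \<omega>, V \<omega>)) (\<lambda>(x,v). ennreal (dirichlet1_density k \<alpha> x) * ennreal (f v))"
    by (rule P.distributed_joint_indep[OF sf_lbk sf_lbk assms(5) assms(6) assms(9)])
  have XV[measurable]: "(\<lambda>\<omega>. (X \<omega>, V \<omega>)) \<in> M \<rightarrow>\<^sub>M lbk k \<Otimes>\<^sub>M lbk k"
    using joint by (simp add: distributed_def)
  have Phi[measurable]: "(\<lambda>(x,v). u_transform k x v) \<in> lbk k \<Otimes>\<^sub>M lbk k \<rightarrow>\<^sub>M lbk k"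
    unfolding u_transform_def by measurable
  have dd[measurable]: "(\<lambda>x. dirichlet1_density k \<alpha> x) \<in> borel_measurable (lbk k)"
    unfolding dens_eq[OF assms(2)] by measurable
  have brec: "\<forall>j\<in>{1..k}. \<beta> j = (if j = k then \<alpha> (k+1) else \<alpha> (j+1) + 1 + \<beta> (j+1))"
    unfolding \<beta>_def by (rule beta_rec)
  have distrU: "distr M (lbk k) U = density (lbk k) G"
  proof (rule measure_eqI)
    show "sets (distr M (lbk k) U) = sets (density (lbk k) G)" by simp
    fix A assume "A \<in> sets (distr M (lbk k) U)"
    then have A[measurable]: "A \<in> sets (lbk k)" by simp
    have "emeasure (distr M (lbk k) U) A = emeasure (distr (distr M (lbk k \<Otimes>\<^sub>M lbk k) (\<lambda>\<omega>. (X \<omega>, V \<omega>))) (lbk k) (\<lambda>(x,v). u_transform k x v)) A"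
      by (subst distr_distr[OF Phi XV]) (simp add: U_def comp_def)
    also have "\<dots> = emeasure (distr (density (lbk k \<Otimes>\<^sub>M lbk k) (\<lambda>(x,v). ennreal (dirichlet1_density k \<alpha> x) * ennreal (f v))) (lbk k) (\<lambda>(x,v). u_transform k x v)) A"
      using joint by (simp add: distributed_def)
    also have "\<dots> = (\<integral>\<^sup>+p. (case p of (x,v) \<Rightarrow> ennreal (dirichlet1_density k \<alpha> x) * ennreal (f v)) * indicator A (case p of (x,v) \<Rightarrow> u_transform k x v) \<partial>(lbk k \<Otimes>\<^sub>M lbk k))"
      apply (subst emeasure_distr[OF _ A])
       apply (simp only: measurable_density_eq1 Phi)
      apply (simp only: space_density)
      apply (subst emeasure_density)
        apply measurable
      apply (intro nn_integral_cong)
      apply (auto simp: indicator_def)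
      done
    also have "\<dots> = (\<integral>\<^sup>+v. \<integral>\<^sup>+x. ennreal (dirichlet1_density k \<alpha> x) * ennreal (f v) * indicator A (u_transform k x v) \<partial>lbk k \<partial>lbk k)"
    proof -
      have m: "(\<lambda>p. (case p of (x,v) \<Rightarrow> ennreal (dirichlet1_density k \<alpha> x) * ennreal (f v)) * indicator A (case p of (x,v) \<Rightarrow> u_transform k x v)) \<in> borel_measurable (lbk k \<Otimes>\<^sub>M lbk k)"
        by measurable
      show ?thesis by (subst pp.nn_integral_snd[symmetric, OF m]) simp
    qed
    also have "\<dots> = (\<integral>\<^sup>+v. \<integral>\<^sup>+u. ennreal (C * f v * (\<Prod>j\<in>{1..k}. kern (\<alpha> j) (\<beta> j) (u j) (v j))) * indicator A u \<partial>lbk k \<partial>lbk k)"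
    proof (rule nn_integral_cong)
      fix v assume v: "v \<in> space (lbk k)"
      show "(\<integral>\<^sup>+x. ennreal (dirichlet1_density k \<alpha> x) * ennreal (f v) * indicator A (u_transform k x v) \<partial>lbk k)
         = (\<integral>\<^sup>+u. ennreal (C * f v * (\<Prod>j\<in>{1..k}. kern (\<alpha> j) (\<beta> j) (u j) (v j))) * indicator A u \<partial>lbk k)"
      proof (cases "v \<in> pos_orthant k")
        case True
        have vp: "\<forall>j\<in>{1..k}. 0 < v j" using True by (simp add: pos_orthant_def)
        have Cf: "0 \<le> C * f v" using Cpos assms(7) by simp
        have "(\<integral>\<^sup>+x. ennreal (dirichlet1_density k \<alpha> x) * ennreal (f v) * indicator A (u_transform k x v) \<partial>lbk k)
           = (\<integral>\<^sup>+x. ennreal (C * f v) * (indicator A (u_transform k x v) * ennreal (Dn k \<alpha> x)) \<partial>lbk k)"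
          by (intro nn_integral_cong) (auto simp: dens_eq[OF assms(2)] C_def[symmetric] ennreal_mult' less_imp_le[OF Cpos] mult_ac)
        also have "\<dots> = ennreal (C * f v) * (\<integral>\<^sup>+x. indicator A (u_transform k x v) * ennreal (Dn k \<alpha> x) \<partial>lbk k)"
          by (rule nn_integral_cmult) measurable
        also have "\<dots> = ennreal (C * f v) * (\<integral>\<^sup>+u. indicator A u * ennreal (\<Prod>j\<in>{1..k}. kern (\<alpha> j) (\<beta> j) (u j) (v j)) \<partial>lbk k)"
          unfolding core[OF vp brec borel_measurable_indicator[OF A]] ..
        also have "\<dots> = (\<integral>\<^sup>+u. ennreal (C * f v * (\<Prod>j\<in>{1..k}. kern (\<alpha> j) (\<beta> j) (u j) (v j))) * indicator A u \<partial>lbk k)"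
          by (subst nn_integral_cmult[symmetric]) (measurable, intro nn_integral_cong, subst ennreal_mult'[OF Cf], simp add: mult_ac)
        finally show ?thesis .
      next
        case False
        then have "f v = 0" using assms(8) by simp
        then show ?thesis by simp
      qed
    qed
    also have "\<dots> = (\<integral>\<^sup>+u. \<integral>\<^sup>+v. ennreal (C * f v * (\<Prod>j\<in>{1..k}. kern (\<alpha> j) (\<beta> j) (u j) (v j))) * indicator A u \<partial>lbk k \<partial>lbk k)"
      by (rule pp.Fubini') measurable
    also have "\<dots> = (\<integral>\<^sup>+u. G u * indicator A u \<partial>lbk k)"
      unfolding G_def by (intro nn_integral_cong nn_integral_multc) measurable
    also have "\<dots> = emeasure (density (lbk k) G) A"
      by (rule emeasure_density[symmetric]) measurable
    finally show "emeasure (distr M (lbk k) U) A = emeasure (density (lbk k) G) A" .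
  qed
  have "distributed M (lbk k) U G"
    unfolding distributed_def using distrU G_meas assms(10) unfolding U_def distributed_def by simp
  then have AE: "AE u in lbk k. ennreal (g u) = G u"
    using P.distributed_unique assms(10) unfolding U_def by blast
  show ?thesis
    using AE
  proof (rule eventually_mono)
    fix u assume gu: "ennreal (g u) = G u"
    show "u \<in> pos_orthant k \<longrightarrow> (\<Prod>j\<in>{1..k}. Gamma (\<alpha> j + 1) / Gamma (\<alpha> j + dir_beta k \<alpha> j + 1)) * g u = kober2 k \<alpha> (dir_beta k \<alpha>) f u"
    proof
      assume up: "u \<in> pos_orthant k"
      have upos: "\<forall>j\<in>{1..k}. 0 < u j" using up by (simp add: pos_orthant_def)
      define Q where "Q = (\<Prod>j\<in>{1..k}. u j powr \<alpha> j)"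
      have Qpos: "Q > 0" unfolding Q_def using upos by (intro prod_pos) force
      have CQ: "C * Q > 0" using Cpos Qpos by simp
      define S where "S = {v \<in> space (lbk k). \<forall>j\<in>{1..k}. u j < v j}"
      define Kf where "Kf = (\<lambda>v. (\<Prod>j\<in>{1..k}. (v j - u j) powr (\<beta> j - 1) * v j powr (- \<alpha> j - \<beta> j)) * f v)"
      have S_meas[measurable]: "S \<in> sets (lbk k)" unfolding S_def by measurable
      have Kf_meas[measurable]: "Kf \<in> borel_measurable (lbk k)" unfolding Kf_def by measurable
      have Kf_nn: "0 \<le> Kf v" for v unfolding Kf_def using assms(7) by (auto intro!: prod_nonneg mult_nonneg_nonneg)
      have iK_nn: "0 \<le> indicator S v * Kf v" for v using Kf_nn by simp
      have pw: "C * f v * (\<Prod>j\<in>{1..k}. kern (\<alpha> j) (\<beta> j) (u j) (v j)) = (C * Q) * (indicator S v * Kf v)"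
        if v: "v \<in> space (lbk k)" for v
      proof (cases "\<forall>j\<in>{1..k}. u j < v j")
        case True
        have "(\<Prod>j\<in>{1..k}. kern (\<alpha> j) (\<beta> j) (u j) (v j)) = (\<Prod>j\<in>{1..k}. u j powr \<alpha> j * ((v j - u j) powr (\<beta> j - 1) * v j powr (- \<alpha> j - \<beta> j)))"
          using True upos by (intro prod.cong) (auto simp: kern_def mult_ac)
        also have "\<dots> = Q * (\<Prod>j\<in>{1..k}. (v j - u j) powr (\<beta> j - 1) * v j powr (- \<alpha> j - \<beta> j))"
          unfolding Q_def by (rule prod.distrib)
        finally show ?thesis using True v by (simp add: S_def Kf_def mult_ac)
      next
        case False
        then obtain j where j: "j \<in> {1..k}" "\<not> u j < v j" by auto
        then have "kern (\<alpha> j) (\<beta> j) (u j) (v j) = 0" by (simp add: kern_def)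
        then have "(\<Prod>j\<in>{1..k}. kern (\<alpha> j) (\<beta> j) (u j) (v j)) = 0" using j by (intro prod_zero) auto
        moreover have "v \<notin> S" using False by (simp add: S_def)
        ultimately show ?thesis by simp
      qed
      define N where "N = (\<integral>\<^sup>+v. ennreal (indicator S v * Kf v) \<partial>lbk k)"
      have "G u = (\<integral>\<^sup>+v. ennreal (C * Q) * ennreal (indicator S v * Kf v) \<partial>lbk k)"
        unfolding G_def
      proof (intro nn_integral_cong)
        fix v assume v: "v \<in> space (lbk k)"
        show "ennreal (C * f v * (\<Prod>j\<in>{1..k}. kern (\<alpha> j) (\<beta> j) (u j) (v j))) = ennreal (C * Q) * ennreal (indicator S v * Kf v)"
          unfolding pw[OF v] by (rule ennreal_mult') (use CQ in simp)
      qed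
      also have "\<dots> = ennreal (C * Q) * N" unfolding N_def by (rule nn_integral_cmult) measurable
      finally have Gu: "G u = ennreal (C * Q) * N" .
      have "N \<noteq> \<top>"
      proof
        assume "N = \<top>"
        then have "ennreal (g u) = \<top>" using gu Gu CQ Cpos Qpos by (simp add: ennreal_mult_eq_top_iff)
        then show False by simp
      qed
      then have fin: "N < \<infinity>" by (simp add: less_top)
      have integ: "integrable (lbk k) (\<lambda>v. indicator S v * Kf v)"
        by (rule integrableI_nonneg) (measurable, simp add: iK_nn, use fin N_def in simp)
      define I where "I = (LINT v : S | lbk k. Kf v)"
      have N_eq: "N = ennreal I"
        unfolding N_def I_def set_lebesgue_integral_def using nn_integral_eq_integral[OF integ] iK_nn by simp
      have Inn: "I \<ge> 0" unfolding I_def set_lebesgue_integral_def using iK_nn by (simp add: integral_nonneg)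
      have "ennreal (g u) = ennreal (C * Q * I)" using gu Gu N_eq CQ by (simp add: ennreal_mult')
      then have gval: "g u = C * Q * I" using assms(11) CQ Inn by (simp add: ennreal_inj)
      have kob: "kober2 k \<alpha> \<beta> f u = (\<Prod>j\<in>{1..k}. u j powr \<alpha> j / Gamma (\<beta> j)) * I"
        unfolding kober2_def I_def S_def Kf_def ..
      have "(\<Prod>j\<in>{1..k}. Gamma (\<alpha> j + 1) / Gamma (\<alpha> j + \<beta> j + 1)) * g u
          = ((\<Prod>j\<in>{1..k}. Gamma (\<alpha> j + 1) / Gamma (\<alpha> j + \<beta> j + 1)) * C) * Q * I"
        unfolding gval by (simp add: mult_ac)
      also have "\<dots> = Q / (\<Prod>j\<in>{1..k}. Gamma (\<beta> j)) * I"
        using const_id[OF assms(3,4,2)] unfolding \<beta>_def C_def by simp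
      also have "\<dots> = kober2 k \<alpha> \<beta> f u" unfolding kob Q_def by (simp add: prod_dividef)
      finally show "(\<Prod>j\<in>{1..k}. Gamma (\<alpha> j + 1) / Gamma (\<alpha> j + dir_beta k \<alpha> j + 1)) * g u = kober2 k \<alpha> (dir_beta k \<alpha>) f u"
        unfolding \<beta>_def .
    qed
  qed
qed

end
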